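(* For every integer $n\ge 0$, there is exactly one Dumont permutation of the second kind of length $2n$ avoiding the pattern $312$, i.e. $|\mathfrak D^2_{2n}(312)|=1$ (for $n=0$ the set consists of the empty permutation).
   Context: A Dumont permutation of the second kind of length $2n$ is a permutation $\pi\in\mathfrak S_{2n}$ such that for every $i=1,\dots,n$ one has $\pi(2i)<2i$ and $\pi(2i-1)\ge 2i-1$. $\mathfrak D^2_{2n}$ denotes the set of these. A permutation $\sigma$ contains a pattern $\tau\in\mathfrak S_k$ if some subsequence $(\sigma(i_1),\dots,\sigma(i_k))$, $i_1<\dots<i_k$, is order-isomorphic to $\tau$; otherwise $\sigma$ avoids $\tau$. $\mathfrak D^2_{2n}(T)$ denotes the set of permutations in $\mathfrak D^2_{2n}$ avoiding every pattern in $T$. *)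

theory Defs
  imports "HOL-Combinatorics.Permutations"
begin

(* A permutation of [m] = {1..m} is a function nat => nat that permutes {1..m}
   (identity outside). Patterns tau in S_k are likewise functions permuting {1..k}. *)

definition dumont2 :: "nat \<Rightarrow> (nat \<Rightarrow> nat) set" where
  "dumont2 n = {\<pi>. \<pi> permutes {1..2*n} \<and>
      (\<forall>i\<in>{1..n}. \<pi> (2*i) < 2*i \<and> \<pi> (2*i - 1) \<ge> 2*i - 1)}"

definition contains_pattern :: "nat \<Rightarrow> (nat \<Rightarrow> nat) \<Rightarrow> nat \<Rightarrow> (nat \<Rightarrow> nat) \<Rightarrow> bool" where
  "contains_pattern m \<sigma> k \<tau> \<longleftrightarrow>
     (\<exists>idx :: nat \<Rightarrow> nat. strict_mono_on {1..k} idx \<and> idx ` {1..k} \<subseteq> {1..m} \<and>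
        (\<forall>a\<in>{1..k}. \<forall>b\<in>{1..k}. \<sigma> (idx a) < \<sigma> (idx b) \<longleftrightarrow> \<tau> a < \<tau> b))"

definition avoids :: "nat \<Rightarrow> (nat \<Rightarrow> nat) \<Rightarrow> nat \<Rightarrow> (nat \<Rightarrow> nat) \<Rightarrow> bool" where
  "avoids m \<sigma> k \<tau> \<longleftrightarrow> \<not> contains_pattern m \<sigma> k \<tau>"

definition pat312 :: "nat \<Rightarrow> nat" where
  "pat312 = (\<lambda>i. if i = 1 then 3 else if i = 2 then 1 else if i = 3 then 2 else i)"

definition dumont2_avoiding :: "nat \<Rightarrow> nat \<Rightarrow> (nat \<Rightarrow> nat) \<Rightarrow> (nat \<Rightarrow> nat) set" where
  "dumont2_avoiding n k \<tau> = {\<pi> \<in> dumont2 n. avoids (2*n) \<pi> k \<tau>}"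

end

theory Submission
  imports Defs
begin

definition sw :: "nat \<Rightarrow> nat \<Rightarrow> nat" where
  "sw n x = (if x \<in> {1..2*n} then (if odd x then x+1 else x-1) else x)"

lemma sw_invol: "sw n (sw n x) = x"
  unfolding sw_def by (auto; presburger?)

lemma sw_permutes: "sw n permutes {1..2*n}"
proof (rule bij_imp_permutes)
  show "bij_betw (sw n) {1..2*n} {1..2*n}"
  proof (rule bij_betw_byWitness[where f'="sw n"])
    show "\<forall>a\<in>{1..2 * n}. sw n (sw n a) = a" "\<forall>a\<in>{1..2 * n}. sw n (sw n a) = a"
      by (auto simp: sw_invol)
    show "sw n ` {1..2 * n} \<subseteq> {1..2 * n}" "sw n ` {1..2 * n} \<subseteq> {1..2 * n}"
      unfolding sw_def by auto presburger+
  qed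
qed (auto simp: sw_def)

lemma sw_desc:
  assumes "x < y" "x \<in> {1..2*n}" "y \<in> {1..2*n}" "sw n x > sw n y"
  shows "y = x + 1"
  using assms unfolding sw_def by (auto split: if_splits; presburger?)

lemma sw_avoids: "avoids (2*n) (sw n) 3 pat312"
  unfolding avoids_def contains_pattern_def
proof
  assume "\<exists>idx. strict_mono_on {1..3} idx \<and> idx ` {1..3} \<subseteq> {1..2 * n} \<and>
      (\<forall>a\<in>{1..3}. \<forall>b\<in>{1..3}. (sw n (idx a) < sw n (idx b)) = (pat312 a < pat312 b))"
  then obtain idx where m: "strict_mono_on {1..3} idx" and r: "idx ` {1..3} \<subseteq> {1..2 * n}"
    and o: "\<forall>a\<in>{1..3}. \<forall>b\<in>{1..3}. (sw n (idx a) < sw n (idx b)) = (pat312 a < pat312 b)"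
    by blast
  have i12: "idx 1 < idx 2" and i23: "idx 2 < idx 3" using m by (auto simp: strict_mono_on_def)
  have r1: "idx 1 \<in> {1..2*n}" "idx 2 \<in> {1..2*n}" "idx 3 \<in> {1..2*n}" using r by (auto simp: image_subset_iff)
  have "sw n (idx 2) < sw n (idx 1)" using o[rule_format, of 2 1] by (simp add: pat312_def)
  then have a: "idx 2 = idx 1 + 1" using sw_desc[OF i12 r1(1,2)] by simp
  have "sw n (idx 3) < sw n (idx 1)" using o[rule_format, of 3 1] by (simp add: pat312_def)
  then have "idx 3 = idx 1 + 1" using sw_desc[of "idx 1" "idx 3"] i12 i23 r1 by simp
  with a i23 show False by simp
qed

lemma sw_dumont: "sw n \<in> dumont2 n"
  unfolding dumont2_def using sw_permutes[of n] by (auto simp: sw_def)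

lemma unique_aux:
  assumes "\<pi> \<in> dumont2_avoiding n 3 pat312"
  shows "i \<le> n \<Longrightarrow> \<forall>j\<in>{1..i}. \<pi> (2*j-1) = 2*j \<and> \<pi> (2*j) = 2*j-1"
proof (induction i)
  case 0
  then show ?case by simp
next
  case (Suc i)
  have perm: "\<pi> permutes {1..2*n}" and D: "\<forall>i\<in>{1..n}. \<pi> (2*i) < 2*i \<and> \<pi> (2*i - 1) \<ge> 2*i - 1"
    and av: "avoids (2*n) \<pi> 3 pat312"
    using assms by (auto simp: dumont2_avoiding_def dumont2_def)
  have IH: "\<forall>j\<in>{1..i}. \<pi> (2*j-1) = 2*j \<and> \<pi> (2*j) = 2*j-1" using Suc by simp
  define m where "m = Suc i"
  have mn: "m \<in> {1..n}" using Suc.prems m_def by simp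
  have inj: "inj \<pi>" using perm permutes_inj by blast
  have low: "\<pi> q \<le> 2*i" if "1 \<le> q" "q \<le> 2*i" for q
  proof -
    define j where "j = (q+1) div 2"
    have "q = 2*j-1 \<or> q = 2*j" unfolding j_def by presburger
    moreover have "j \<in> {1..i}" using that unfolding j_def by auto
    ultimately show ?thesis using IH by auto
  qed
  have lowinv: "q \<le> 2*i" if "1 \<le> \<pi> q" "\<pi> q \<le> 2*i" for q
  proof -
    define j where "j = (\<pi> q+1) div 2"
    have j2: "\<pi> q = 2*j-1 \<or> \<pi> q = 2*j" unfolding j_def by presburger
    have j: "j \<in> {1..i}" "\<pi> q = 2*j-1 \<or> \<pi> q = 2*j" using that j2 unfolding j_def by auto
    then have "\<pi> q = \<pi> (2*j) \<or> \<pi> q = \<pi> (2*j-1)" using IH by auto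
    then have "q = 2*j \<or> q = 2*j-1" using inj by (auto dest: injD)
    then show ?thesis using j by auto
  qed
  have pin: "\<pi> x \<in> {1..2*n} \<longleftrightarrow> x \<in> {1..2*n}" for x using permutes_in_image[OF perm] .
  have e1: "\<pi> (2*m) < 2*m" "\<pi> (2*m-1) \<ge> 2*m-1" using D mn by auto
  have "\<pi> (2*m) \<ge> 1" using pin[of "2*m"] mn by auto
  moreover have "\<not> \<pi> (2*m) \<le> 2*i" using lowinv[of "2*m"] \<open>\<pi> (2*m) \<ge> 1\<close> m_def by auto
  ultimately have e2: "\<pi> (2*m) = 2*m-1" using e1 m_def by auto
  have "\<pi> (2*m-1) \<noteq> 2*m-1"
  proof
    assume "\<pi> (2*m-1) = 2*m-1"
    then have "\<pi> (2*m-1) = \<pi> (2*m)" using e2 by simp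
    then show False using inj m_def by (auto dest: injD)
  qed
  then have ge: "\<pi> (2*m-1) \<ge> 2*m" using e1 by auto
  have e3: "\<pi> (2*m-1) = 2*m"
  proof (rule ccontr)
    assume "\<pi> (2*m-1) \<noteq> 2*m"
    then have v: "\<pi> (2*m-1) > 2*m" using ge by auto
    have "\<pi> (2*m-1) \<le> 2*n" using pin[of "2*m-1"] mn by auto
    then have "2*m \<in> {1..2*n}" using v mn by auto
    define p where "p = inv \<pi> (2*m)"
    have pp: "\<pi> p = 2*m" unfolding p_def using permutes_inverses[OF perm] by simp
    have pr: "p \<in> {1..2*n}" using pin[of p] pp \<open>2*m \<in> {1..2*n}\<close> by simp
    have "p \<noteq> 2*m-1" "p \<noteq> 2*m" using pp v e2 m_def by auto
    moreover have "\<not> p \<le> 2*i" using low[of p] pp pr m_def by auto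
    ultimately have pg: "p > 2*m" using m_def by auto
    define idx where "idx = (\<lambda>a::nat. if a = 1 then 2*m-1 else if a = 2 then 2*m else p)"
    have "contains_pattern (2*n) \<pi> 3 pat312"
      unfolding contains_pattern_def
    proof (intro exI conjI)
      show "strict_mono_on {1..3} idx"
        unfolding strict_mono_on_def idx_def using pg m_def by auto
      show "idx ` {1..3} \<subseteq> {1..2 * n}" unfolding idx_def using pr mn by auto
      have s: "a \<in> {1..3} \<Longrightarrow> a = 1 \<or> a = 2 \<or> a = (3::nat)" for a by auto
      show "\<forall>a\<in>{1..3}. \<forall>b\<in>{1..3}. (\<pi> (idx a) < \<pi> (idx b)) = (pat312 a < pat312 b)"
        apply (intro ballI)
        subgoal for a b using s[of a] s[of b] v pp e2 m_def
          by (auto simp: idx_def pat312_def)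
        done
    qed
    then show False using av by (simp add: avoids_def)
  qed
  show ?case using IH e2 e3 m_def by (auto simp: le_Suc_eq)
qed

lemma unique:
  assumes "\<pi> \<in> dumont2_avoiding n 3 pat312"
  shows "\<pi> = sw n"
proof
  fix x
  have perm: "\<pi> permutes {1..2*n}" using assms by (auto simp: dumont2_avoiding_def dumont2_def)
  have U: "\<forall>j\<in>{1..n}. \<pi> (2*j-1) = 2*j \<and> \<pi> (2*j) = 2*j-1" using unique_aux[OF assms, of n] by simp
  show "\<pi> x = sw n x"
  proof (cases "x \<in> {1..2*n}")
    case False
    then show ?thesis using permutes_not_in[OF perm False] False by (auto simp: sw_def)
  next
    case True
    show ?thesis
    proof (cases "odd x")
      case True
      then obtain j where "x = 2*j+1" using oddE by blast
      then show ?thesis using U[rule_format, of "j+1"] \<open>x \<in> {1..2*n}\<close> by (auto simp: sw_def)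
    next
      case False
      then obtain j where "x = 2*j" by blast
      then show ?thesis using U[rule_format, of "j"] \<open>x \<in> {1..2*n}\<close> by (auto simp: sw_def)
    qed
  qed
qed

theorem theorem2p4:
  fixes n :: nat
  shows "card (dumont2_avoiding n 3 pat312) = 1"
proof -
  have "dumont2_avoiding n 3 pat312 = {sw n}"
    using unique sw_avoids sw_dumont by (auto simp: dumont2_avoiding_def)
  then show ?thesis by simp
qed

end
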